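(* Let $X$ be a real random variable with mean zero and finite variance $\sigma^2>0$, let $X^*$ have the zero bias distribution of $X$, and suppose $X^*\leq_{\sigma,k}X+c$ for positive constants $k$ and $c$. Then for all $x\ge0$, $$\mathbb{P}(X-\mathbb{E}X\ge x)\le\exp\left(-\frac{x^2}{2(k^2+cx)}\right).$$
   Context: Zero bias transform: for $X$ with mean zero and finite variance $\sigma^2$, $X^*$ has the zero bias distribution of $X$ if $\mathbb{E}[Xf(X)]=\sigma^2\mathbb{E}[f'(X^* )]$ for all absolutely continuous $f$ for which the expectations exist. Weighted stochastic order: $U\leq_{a,b}V$ means $a^2\mathbb{E}f(U)\le b^2\mathbb{E}f(V)$ for every increasing positive function $f$ for which the expectations exist. *)

theory Defs
  imports "HOL-Probability.Probability"
begin

text \<open>A function f on the reals is (locally) absolutely continuous with (a.e.) derivative g: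
  g is locally Lebesgue integrable and f is an indefinite integral of g.\<close>
definition abs_cont_deriv :: "(real \<Rightarrow> real) \<Rightarrow> (real \<Rightarrow> real) \<Rightarrow> bool" where
  "abs_cont_deriv f g \<longleftrightarrow> g \<in> borel_measurable borel \<and>
     (\<forall>a b. a \<le> b \<longrightarrow> set_integrable lborel {a..b} g \<and>
        f b - f a = (LINT t:{a..b}|lborel. g t))"

definition zero_bias :: "'a measure \<Rightarrow> ('a \<Rightarrow> real) \<Rightarrow> 'b measure \<Rightarrow> ('b \<Rightarrow> real) \<Rightarrow> bool" where
  "zero_bias M X N Xs \<longleftrightarrow>
     (\<forall>f g. abs_cont_deriv f g \<longrightarrow> integrable M (\<lambda>w. X w * f (X w)) \<longrightarrow>
        integrable N (\<lambda>w. g (Xs w)) \<longrightarrow>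
        (\<integral>w. X w * f (X w) \<partial>M) =
          (\<integral>w. (X w - (\<integral>v. X v \<partial>M))\<^sup>2 \<partial>M) * (\<integral>w. g (Xs w) \<partial>N))"

definition weighted_order :: "real \<Rightarrow> real \<Rightarrow> 'a measure \<Rightarrow> ('a \<Rightarrow> real) \<Rightarrow> 'b measure \<Rightarrow> ('b \<Rightarrow> real) \<Rightarrow> bool" where
  "weighted_order a b M U N V \<longleftrightarrow>
     (\<forall>f::real \<Rightarrow> real. mono f \<longrightarrow> (\<forall>x. f x > 0) \<longrightarrow>
        integrable M (\<lambda>w. f (U w)) \<longrightarrow> integrable N (\<lambda>w. f (V w)) \<longrightarrow>
        a\<^sup>2 * (\<integral>w. f (U w) \<partial>M) \<le> b\<^sup>2 * (\<integral>w. f (V w) \<partial>N))"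

end

theory Submission
  imports Defs
begin

lemma exp_diff_bound:
  fixes u v :: real
  shows "\<bar>exp u - exp v\<bar> \<le> \<bar>u - v\<bar> * max (exp u) (exp v)"
proof (cases "u \<le> v")
  case True
  have "exp (u - v) \<ge> 1 + (u - v)" by (rule exp_ge_add_one_self)
  then have "exp u \<ge> exp v * (1 + (u - v))" by (simp add: exp_diff field_simps)
  then show ?thesis using True by (simp add: abs_if max_def algebra_simps)
next
  case False
  have "exp (v - u) \<ge> 1 + (v - u)" by (rule exp_ge_add_one_self)
  then have "exp v \<ge> exp u * (1 + (v - u))" by (simp add: exp_diff field_simps)
  then show ?thesis using False by (simp add: abs_if max_def algebra_simps)
qed

lemma deriv_mgf:
  fixes M :: "'a measure" and Y :: "'a \<Rightarrow> real"
  assumes P: "prob_space M" and Ym: "Y \<in> borel_measurable M" and Yi: "integrable M Y"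
    and Ya: "\<And>w. w \<in> space M \<Longrightarrow> Y w \<le> a" and th: "\<theta> > 0"
  shows "((\<lambda>t. \<integral>w. exp (t * Y w) \<partial>M) has_real_derivative (\<integral>w. Y w * exp (\<theta> * Y w) \<partial>M)) (at \<theta>)"
proof -
  interpret prob_space M by (rule P)
  let ?S = "{0<..<2*\<theta>}"
  have at: "at \<theta> within ?S = at \<theta>" by (rule at_within_open) (use th in auto)
  define C where "C = exp (2 * \<theta> * \<bar>a\<bar>)"
  have expb: "exp (t * Y w) \<le> C" if "w \<in> space M" "t \<in> ?S" for t w
  proof (cases "Y w \<le> 0")
    case True
    then have "t * Y w \<le> 0" using that by (simp add: mult_nonneg_nonpos)
    then have "exp (t * Y w) \<le> 1" by simp
    also have "1 \<le> C" unfolding C_def using th by simp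
    finally show ?thesis .
  next
    case False
    have "t * Y w \<le> 2 * \<theta> * \<bar>a\<bar>" using that False Ya[OF that(1)]
      by (intro mult_mono) auto
    then show ?thesis unfolding C_def by simp
  qed
  have "((\<lambda>t. ((\<integral>w. exp (t * Y w) \<partial>M) - (\<integral>w. exp (\<theta> * Y w) \<partial>M)) / (t - \<theta>))
          \<longlongrightarrow> (\<integral>w. Y w * exp (\<theta> * Y w) \<partial>M)) (at \<theta> within ?S)"
    unfolding tendsto_at_iff_sequentially
  proof (intro allI impI)
    fix T :: "nat \<Rightarrow> real" assume T: "\<forall>i. T i \<in> ?S - {\<theta>}" and Tl: "T \<longlonglongrightarrow> \<theta>"
    have ie: "integrable M (\<lambda>w. exp (t * Y w))" if "t \<in> ?S" for t
      using expb[OF _ that] Ym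
      by (intro integrable_const_bound[where B=C]) auto
    have ieth: "integrable M (\<lambda>w. exp (\<theta> * Y w))" using ie[of \<theta>] th by simp
    have lim: "(\<lambda>i. \<integral>w. (exp (T i * Y w) - exp (\<theta> * Y w)) / (T i - \<theta>) \<partial>M)
        \<longlonglongrightarrow> (\<integral>w. Y w * exp (\<theta> * Y w) \<partial>M)"
    proof (rule integral_dominated_convergence[where w="\<lambda>w. \<bar>Y w\<bar> * C"])
      show "(\<lambda>w. Y w * exp (\<theta> * Y w)) \<in> borel_measurable M" using Ym by measurable
      show "\<And>i. (\<lambda>w. (exp (T i * Y w) - exp (\<theta> * Y w)) / (T i - \<theta>)) \<in> borel_measurable M"
        using Ym by measurable
      show "integrable M (\<lambda>w. \<bar>Y w\<bar> * C)" using Yi by auto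
      show "AE w in M. (\<lambda>i. (exp (T i * Y w) - exp (\<theta> * Y w)) / (T i - \<theta>)) \<longlonglongrightarrow> Y w * exp (\<theta> * Y w)"
      proof (rule AE_I2)
        fix w
        have "((\<lambda>t. exp (t * Y w)) has_real_derivative exp (\<theta> * Y w) * Y w) (at \<theta> within ?S)"
          by (auto intro!: derivative_eq_intros)
        then have "((\<lambda>t. (exp (t * Y w) - exp (\<theta> * Y w)) / (t - \<theta>)) \<longlongrightarrow> exp (\<theta> * Y w) * Y w) (at \<theta> within ?S)"
          by (simp add: has_field_derivative_iff)
        then have "((\<lambda>t. (exp (t * Y w) - exp (\<theta> * Y w)) / (t - \<theta>)) \<circ> T) \<longlonglongrightarrow> exp (\<theta> * Y w) * Y w"
          using T Tl unfolding tendsto_at_iff_sequentially by blast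
        then show "(\<lambda>i. (exp (T i * Y w) - exp (\<theta> * Y w)) / (T i - \<theta>)) \<longlonglongrightarrow> Y w * exp (\<theta> * Y w)"
          by (simp add: o_def mult.commute)
      qed
      show "AE w in M. norm ((exp (T i * Y w) - exp (\<theta> * Y w)) / (T i - \<theta>)) \<le> \<bar>Y w\<bar> * C" for i
      proof (rule AE_I2)
        fix w assume w: "w \<in> space M"
        have Ti: "T i \<in> ?S" "T i \<noteq> \<theta>" using T by auto
        have "\<bar>exp (T i * Y w) - exp (\<theta> * Y w)\<bar> \<le> \<bar>T i * Y w - \<theta> * Y w\<bar> * max (exp (T i * Y w)) (exp (\<theta> * Y w))"
          by (rule exp_diff_bound)
        also have "\<dots> \<le> \<bar>T i - \<theta>\<bar> * \<bar>Y w\<bar> * C"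
          using expb[OF w Ti(1)] expb[OF w, of \<theta>] th
          by (auto simp: abs_mult left_diff_distrib[symmetric] mult.assoc intro!: mult_left_mono)
        finally have "\<bar>exp (T i * Y w) - exp (\<theta> * Y w)\<bar> \<le> \<bar>T i - \<theta>\<bar> * (\<bar>Y w\<bar> * C)" by (simp add: mult.assoc)
        then show "norm ((exp (T i * Y w) - exp (\<theta> * Y w)) / (T i - \<theta>)) \<le> \<bar>Y w\<bar> * C"
          using Ti by (simp add: abs_divide divide_le_eq mult.commute)
      qed
    qed
    have eq: "(\<integral>w. (exp (T i * Y w) - exp (\<theta> * Y w)) / (T i - \<theta>) \<partial>M)
        = ((\<integral>w. exp (T i * Y w) \<partial>M) - (\<integral>w. exp (\<theta> * Y w) \<partial>M)) / (T i - \<theta>)" for i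
      using ie[of "T i"] T ieth by (simp add: integral_diff)
    show "((\<lambda>t. ((\<integral>w. exp (t * Y w) \<partial>M) - (\<integral>w. exp (\<theta> * Y w) \<partial>M)) / (t - \<theta>)) \<circ> T)
        \<longlonglongrightarrow> (\<integral>w. Y w * exp (\<theta> * Y w) \<partial>M)"
      using lim unfolding eq o_def .
  qed
  then have "((\<lambda>t. \<integral>w. exp (t * Y w) \<partial>M) has_real_derivative (\<integral>w. Y w * exp (\<theta> * Y w) \<partial>M)) (at \<theta> within ?S)"
    by (simp add: has_field_derivative_iff)
  then show ?thesis using at by simp
qed

lemma abs_cont_trunc_exp:
  fixes t x0 :: real
  assumes t: "t > 0"
  shows "abs_cont_deriv (\<lambda>s. exp (t * min s x0)) (\<lambda>s. if s \<le> x0 then t * exp (t * s) else 0)"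
  unfolding abs_cont_deriv_def
proof (intro conjI allI impI)
  let ?f = "\<lambda>s. exp (t * min s x0)"
  let ?g = "\<lambda>s::real. if s \<le> x0 then t * exp (t * s) else 0"
  show gm: "?g \<in> borel_measurable borel" by measurable
  fix a b :: real assume ab: "a \<le> b"
  have gb: "norm (?g s) \<le> t * exp (t * x0)" for s
    using t by (auto simp: mult_left_mono)
  show si: "set_integrable lborel {a..b} ?g"
    unfolding set_integrable_def
    by (rule integrableI_bounded_set[where A="{a..b}" and B="t * exp (t * x0)"])
       (use gb gm ab in \<open>auto simp: indicator_def emeasure_lborel_Icc_eq\<close>)
  have "(?g has_integral (?f b - ?f a)) {a..b}"
  proof (rule fundamental_theorem_of_calculus_interior_strong[where S="{x0}"])
    show "continuous_on {a..b} ?f" by (intro continuous_intros)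
    fix s assume s: "s \<in> {a<..<b} - {x0}"
    show "(?f has_vector_derivative ?g s) (at s)"
      unfolding has_real_derivative_iff_has_vector_derivative[symmetric]
    proof (cases "s < x0")
      case True
      have "((\<lambda>s. exp (t * s)) has_real_derivative exp (t * s) * t) (at s)"
        by (auto intro!: derivative_eq_intros)
      then have "(?f has_real_derivative exp (t * s) * t) (at s)"
        by (rule has_field_derivative_transform_within_open[where S="{..<x0}"]) (use True in auto)
      then show "(?f has_real_derivative ?g s) (at s)" using True by (simp add: mult.commute)
    next
      case False
      then have "s > x0" using s by auto
      have "((\<lambda>s. exp (t * x0)) has_real_derivative 0) (at s)"
        by (auto intro!: derivative_eq_intros)
      then have "(?f has_real_derivative 0) (at s)"
        by (rule has_field_derivative_transform_within_open[where S="{x0<..}"]) (use \<open>s > x0\<close> in auto)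
      then show "(?f has_real_derivative ?g s) (at s)" using \<open>s > x0\<close> by simp
    qed
  qed (use ab in auto)
  then show "?f b - ?f a = (LINT s:{a..b}|lborel. ?g s)"
    using set_borel_integral_eq_integral(2)[OF si] by (simp add: integral_unique)
qed

lemma key_ineq:
  fixes M :: "'a measure" and X :: "'a \<Rightarrow> real"
    and N :: "'b measure" and Xs :: "'b \<Rightarrow> real"
    and \<sigma> k c x t :: real
  assumes PM: "prob_space M" and PN: "prob_space N"
    and Xm: "X \<in> borel_measurable M" and Xsm: "Xs \<in> borel_measurable N"
    and Xi: "integrable M X"
    and s2: "\<sigma>\<^sup>2 = (\<integral>w. (X w - (\<integral>v. X v \<partial>M))\<^sup>2 \<partial>M)"
    and zb: "zero_bias M X N Xs"
    and wo: "weighted_order \<sigma> k N Xs M (\<lambda>w. X w + c)"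
    and t: "t > 0" and c0: "c \<ge> 0"
  shows "(\<integral>w. min (X w) x * exp (t * min (X w) x) \<partial>M)
           \<le> k\<^sup>2 * t * exp (c * t) * (\<integral>w. exp (t * min (X w) x) \<partial>M)"
proof -
  interpret M: prob_space M by (rule PM)
  interpret N: prob_space N by (rule PN)
  define f where "f s = exp (t * min s x)" for s
  define g where "g s = (if s \<le> x then t * exp (t * s) else 0)" for s
  have fpos: "0 < f s" for s unfolding f_def by simp
  have fb: "f s \<le> exp (t * x)" for s unfolding f_def using t by (simp add: mult_left_mono)
  have fm: "f \<in> borel_measurable borel" unfolding f_def by measurable
  have gm: "g \<in> borel_measurable borel" unfolding g_def by measurable
  have gle: "g s \<le> t * f s" for s unfolding g_def f_def using t by auto
  have g0: "0 \<le> g s" for s unfolding g_def using t by auto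
  have gb: "g s \<le> t * exp (t * x)" for s using gle[of s] fb[of s] t by (smt (verit) mult_left_mono)
  have mono_f: "mono f" unfolding f_def mono_def using t by (auto intro: mult_left_mono)
  have ac: "abs_cont_deriv f g" unfolding f_def[abs_def] g_def[abs_def] by (rule abs_cont_trunc_exp[OF t])
  have i1: "integrable M (\<lambda>w. X w * f (X w))"
  proof (rule Bochner_Integration.integrable_bound[where f="\<lambda>w. exp (t * x) * X w"])
    show "integrable M (\<lambda>w. exp (t * x) * X w)" using Xi by auto
    show "(\<lambda>w. X w * f (X w)) \<in> borel_measurable M" using Xm fm by measurable
    show "AE w in M. norm (X w * f (X w)) \<le> norm (exp (t * x) * X w)"
    proof (rule AE_I2)
      fix w
      have "\<bar>f (X w)\<bar> \<le> exp (t * x)" using fb[of "X w"] fpos[of "X w"] by simp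
      then show "norm (X w * f (X w)) \<le> norm (exp (t * x) * X w)"
        by (simp add: abs_mult mult.commute mult_left_mono)
    qed
  qed
  have i2: "integrable N (\<lambda>w. g (Xs w))"
    by (rule N.integrable_const_bound[where B="t * exp (t * x)"]) (use gb g0 Xsm gm in auto)
  have i3: "integrable N (\<lambda>w. f (Xs w))"
    by (rule N.integrable_const_bound[where B="exp (t * x)"]) (use fb fpos Xsm fm in \<open>auto simp: less_imp_le\<close>)
  have i4: "integrable M (\<lambda>w. f (X w + c))"
    by (rule M.integrable_const_bound[where B="exp (t * x)"]) (use fb fpos Xm fm in \<open>auto simp: less_imp_le\<close>)
  have i5: "integrable M (\<lambda>w. exp (t * min (X w) x))"
    using i4 fb fpos Xm by (intro M.integrable_const_bound[where B="exp (t * x)"]) (auto simp: f_def less_imp_le)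
  have i6: "integrable M (\<lambda>w. min (X w) x * exp (t * min (X w) x))"
  proof (rule Bochner_Integration.integrable_bound[where f="\<lambda>w. exp (t * x) * \<bar>min (X w) x\<bar>"])
    show "integrable M (\<lambda>w. exp (t * x) * \<bar>min (X w) x\<bar>)" using Xi by auto
    show "(\<lambda>w. min (X w) x * exp (t * min (X w) x)) \<in> borel_measurable M" using Xm by measurable
    show "AE w in M. norm (min (X w) x * exp (t * min (X w) x)) \<le> norm (exp (t * x) * \<bar>min (X w) x\<bar>)"
    proof (rule AE_I2)
      fix w
      have "exp (t * min (X w) x) \<le> exp (t * x)" using fb[of "X w"] by (simp add: f_def)
      then show "norm (min (X w) x * exp (t * min (X w) x)) \<le> norm (exp (t * x) * \<bar>min (X w) x\<bar>)"
        by (simp add: abs_mult mult.commute[of "exp (t * x)"] mult_left_mono)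
    qed
  qed
  have "(\<integral>w. min (X w) x * exp (t * min (X w) x) \<partial>M) \<le> (\<integral>w. X w * f (X w) \<partial>M)"
    using i6 i1 by (rule integral_mono) (auto simp: f_def intro!: mult_right_mono)
  also have "\<dots> = \<sigma>\<^sup>2 * (\<integral>w. g (Xs w) \<partial>N)"
    using zb ac i1 i2 unfolding zero_bias_def s2 by blast
  also have "\<dots> \<le> \<sigma>\<^sup>2 * (t * (\<integral>w. f (Xs w) \<partial>N))"
  proof (intro mult_left_mono)
    have "(\<integral>w. g (Xs w) \<partial>N) \<le> (\<integral>w. t * f (Xs w) \<partial>N)"
      using i2 i3 gle by (intro integral_mono) auto
    then show "(\<integral>w. g (Xs w) \<partial>N) \<le> t * (\<integral>w. f (Xs w) \<partial>N)" by simp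
  qed simp
  also have "\<dots> = t * (\<sigma>\<^sup>2 * (\<integral>w. f (Xs w) \<partial>N))" by simp
  also have "\<dots> \<le> t * (k\<^sup>2 * (\<integral>w. f (X w + c) \<partial>M))"
  proof (intro mult_left_mono)
    show "\<sigma>\<^sup>2 * (\<integral>w. f (Xs w) \<partial>N) \<le> k\<^sup>2 * (\<integral>w. f (X w + c) \<partial>M)"
      using wo mono_f fpos i3 i4 unfolding weighted_order_def by blast
  qed (use t in simp)
  also have "\<dots> \<le> t * (k\<^sup>2 * (exp (c * t) * (\<integral>w. exp (t * min (X w) x) \<partial>M)))"
  proof (intro mult_left_mono)
    have "(\<integral>w. f (X w + c) \<partial>M) \<le> (\<integral>w. exp (c * t) * exp (t * min (X w) x) \<partial>M)"
    proof (rule integral_mono)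
      show "integrable M (\<lambda>w. exp (c * t) * exp (t * min (X w) x))" using i5 by auto
      fix w
      have "min (X w + c) x \<le> c + min (X w) x" using c0 by linarith
      then have "t * min (X w + c) x \<le> t * (c + min (X w) x)" using t by (intro mult_left_mono) auto
      then have "t * min (X w + c) x \<le> c * t + t * min (X w) x" by (simp add: algebra_simps)
      then show "f (X w + c) \<le> exp (c * t) * exp (t * min (X w) x)"
        unfolding f_def by (simp add: exp_add[symmetric])
    qed (rule i4)
    then show "(\<integral>w. f (X w + c) \<partial>M) \<le> exp (c * t) * (\<integral>w. exp (t * min (X w) x) \<partial>M)" by simp
  qed (use t in auto)
  finally show ?thesis by (simp add: algebra_simps)
qed

lemma exp_le_aux:
  fixes u :: real assumes u: "0 \<le> u" "u < 1"
  shows "exp u \<le> (2 - u) / (2 * (1 - u)\<^sup>2)"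
proof -
  have e1: "exp u \<le> 1 / (1 - u)"
  proof -
    have "1 - u \<le> exp (- u)" using exp_ge_add_one_self[of "-u"] by simp
    then have "(1 - u) * exp u \<le> 1" by (simp add: exp_minus field_simps)
    then show ?thesis using u by (simp add: field_simps)
  qed
  have q: "1 \<le> 1 / (1 - u)" using u by (simp add: field_simps)
  have e2: "exp u \<le> 1 / (1 - u)\<^sup>2"
  proof -
    have "exp u \<le> 1 / (1 - u) * 1" using e1 by simp
    also have "\<dots> \<le> 1 / (1 - u) * (1 / (1 - u))" using q u by (intro mult_left_mono) auto
    finally show ?thesis by (simp add: power2_eq_square)
  qed
  have gen: "(1 + v) / (2 * v\<^sup>2) = (1 / v\<^sup>2 + 1 / v) / 2" if "v > 0" for v :: real
    using that by (simp add: field_simps power2_eq_square)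
  have eq: "(2 - u) / (2 * (1 - u)\<^sup>2) = (1 / (1 - u)\<^sup>2 + 1 / (1 - u)) / 2"
    using gen[of "1 - u"] u by simp
  have "exp u + exp u \<le> 1 / (1 - u)\<^sup>2 + 1 / (1 - u)" using add_mono[OF e2 e1] .
  then show ?thesis unfolding eq by (simp add: le_divide_eq)
qed

theorem corollary2p1:
  fixes M :: "'a measure" and X :: "'a \<Rightarrow> real"
    and N :: "'b measure" and Xs :: "'b \<Rightarrow> real"
    and \<sigma> k c x :: real
  assumes "prob_space M" and "prob_space N"
    and "X \<in> borel_measurable M" and "Xs \<in> borel_measurable N"
    and "integrable M X" and "integrable M (\<lambda>w. (X w)\<^sup>2)"
    and "(\<integral>w. X w \<partial>M) = 0"
    and "\<sigma> > 0" and "\<sigma>\<^sup>2 = (\<integral>w. (X w - (\<integral>v. X v \<partial>M))\<^sup>2 \<partial>M)"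
    and "zero_bias M X N Xs"
    and "k > 0" and "c > 0"
    and "weighted_order \<sigma> k N Xs M (\<lambda>w. X w + c)"
    and "x \<ge> 0"
  shows "measure M {w \<in> space M. X w - (\<integral>v. X v \<partial>M) \<ge> x}
           \<le> exp (- (x\<^sup>2 / (2 * (k\<^sup>2 + c * x))))"
proof -
  note A = assms
  interpret M: prob_space M by (rule A(1))
  have Xm: "X \<in> borel_measurable M" by (rule A(3))
  let ?A = "{w \<in> space M. x \<le> X w}"
  have setA: "{w \<in> space M. X w - (\<integral>v. X v \<partial>M) \<ge> x} = ?A" using A(7) by simp
  have Asets: "?A \<in> sets M" using Xm by measurable
  show ?thesis
  proof (cases "x = 0")
    case True
    then show ?thesis by simp
  next
    case False
    then have x: "x > 0" using A(14) by simp
    define Y where "Y w = min (X w) x" for w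
    define F where "F t = (\<integral>w. exp (t * Y w) \<partial>M)" for t
    define D where "D t = (\<integral>w. Y w * exp (t * Y w) \<partial>M)" for t
    have Ym: "Y \<in> borel_measurable M" unfolding Y_def using Xm by measurable
    have Yi: "integrable M Y" unfolding Y_def using A(5) by auto
    have Yx: "Y w \<le> x" for w unfolding Y_def by simp
    have der: "(F has_real_derivative D t) (at t)" if "t > 0" for t
      unfolding F_def[abs_def] D_def
      by (rule deriv_mgf[OF A(1) Ym Yi _ that, of x]) (use Yx in auto)
    have key: "D t \<le> k\<^sup>2 * t * exp (c * t) * F t" if "t > 0" for t
      unfolding D_def F_def Y_def
      by (rule key_ineq[OF A(1) A(2) A(3) A(4) A(5) A(9) A(10) A(13) that]) (use A(12) in simp)
    have Fnn: "F t \<ge> 0" for t unfolding F_def by simp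
    have Fle: "F t \<le> exp (t * x)" if "t > 0" for t
    proof -
      have "F t \<le> (\<integral>w. exp (t * x) \<partial>M)" unfolding F_def
      proof (rule integral_mono)
        show "integrable M (\<lambda>w. exp (t * Y w))"
          by (rule M.integrable_const_bound[where B="exp (t * x)"])
             (use Ym Yx that in \<open>auto simp: mult_left_mono\<close>)
      qed (use Yx that in \<open>auto simp: mult_left_mono\<close>)
      then show ?thesis by (simp add: M.prob_space)
    qed
    define K where "K = k\<^sup>2 + c * x"
    have K: "K > 0" unfolding K_def using A(11) A(12) x by (simp add: add_pos_nonneg)
    define \<theta> where "\<theta> = x / K"
    have th: "\<theta> > 0" unfolding \<theta>_def using x K by simp
    have cxK: "c * x < K" unfolding K_def using A(11) by simp
    have cth: "c * \<theta> < 1" unfolding \<theta>_def using cxK K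
      by (simp add: divide_less_eq)
    define \<Phi> where "\<Phi> t = k\<^sup>2 * t\<^sup>2 / (2 * (1 - c * t))" for t
    define \<Phi>' where "\<Phi>' t = k\<^sup>2 * t * (2 - c * t) / (2 * (1 - c * t)\<^sup>2)" for t
    have dPhi: "(\<Phi> has_real_derivative \<Phi>' t) (at t)" if "c * t < 1" for t
    proof -
      have ne: "1 - c * t \<noteq> 0" using that by simp
      have d1: "((\<lambda>t. k\<^sup>2 * t\<^sup>2) has_real_derivative k\<^sup>2 * (2 * t)) (at t)"
        by (auto intro!: derivative_eq_intros)
      have d2: "((\<lambda>t. 2 * (1 - c * t)) has_real_derivative - 2 * c) (at t)"
        by (auto intro!: derivative_eq_intros)
      have "\<Phi> = (\<lambda>t. k\<^sup>2 * t\<^sup>2 / (2 * (1 - c * t)))" unfolding \<Phi>_def by simp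
      moreover have "(k\<^sup>2 * (2 * t) * (2 * (1 - c * t)) - k\<^sup>2 * t\<^sup>2 * (- 2 * c))
           / (2 * (1 - c * t) * (2 * (1 - c * t))) = \<Phi>' t"
      proof -
        have num: "k\<^sup>2 * (2 * t) * (2 * (1 - c * t)) - k\<^sup>2 * t\<^sup>2 * (- 2 * c) = 2 * (k\<^sup>2 * t * (2 - c * t))"
          by (simp add: algebra_simps power2_eq_square)
        have den: "2 * (1 - c * t) * (2 * (1 - c * t)) = 2 * (2 * (1 - c * t)\<^sup>2)"
          by (simp add: power2_eq_square algebra_simps)
        show ?thesis unfolding \<Phi>'_def num den by (rule mult_divide_mult_cancel_left) simp
      qed
      ultimately show ?thesis using DERIV_divide[OF d1 d2] ne by simp
    qed
    define h where "h t = F t * exp (- \<Phi> t)" for t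
    have hdec: "h \<theta> \<le> h e" if e: "0 < e" "e \<le> \<theta>" for e
    proof (rule DERIV_nonpos_imp_nonincreasing[OF e(2)])
      fix t assume t: "e \<le> t" "t \<le> \<theta>"
      have t0: "t > 0" using t e by simp
      have ct: "c * t < 1" using cth t A(12) by (smt (verit) mult_left_mono)
      have "(h has_real_derivative D t * exp (- \<Phi> t) + exp (- \<Phi> t) * (- \<Phi>' t) * F t) (at t)"
        unfolding h_def[abs_def]
        by (rule DERIV_mult[OF der[OF t0] DERIV_fun_exp[OF DERIV_minus[OF dPhi[OF ct]]]])
      moreover have "D t * exp (- \<Phi> t) + exp (- \<Phi> t) * (- \<Phi>' t) * F t \<le> 0"
      proof -
        have u: "0 \<le> c * t" using A(12) t0 by simp
        have "exp (c * t) \<le> (2 - c * t) / (2 * (1 - c * t)\<^sup>2)" by (rule exp_le_aux[OF u ct])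
        then have "k\<^sup>2 * t * exp (c * t) \<le> k\<^sup>2 * t * ((2 - c * t) / (2 * (1 - c * t)\<^sup>2))"
          using t0 by (intro mult_left_mono) auto
        then have "k\<^sup>2 * t * exp (c * t) \<le> \<Phi>' t" unfolding \<Phi>'_def by simp
        then have "D t \<le> \<Phi>' t * F t" using key[OF t0] Fnn[of t]
          by (smt (verit) mult_right_mono)
        then have "(D t - \<Phi>' t * F t) * exp (- \<Phi> t) \<le> 0"
          by (intro mult_nonpos_nonneg) auto
        then show ?thesis by (simp add: algebra_simps)
      qed
      ultimately show "\<exists>y. (h has_real_derivative y) (at t) \<and> y \<le> 0" by blast
    qed
    have hle: "h \<theta> \<le> exp (e * x)" if e: "0 < e" "e \<le> \<theta>" for e
    proof -
      have ce: "c * e < 1" using cth e A(12) by (smt (verit) mult_left_mono)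
      have "\<Phi> e \<ge> 0" unfolding \<Phi>_def using ce by simp
      then have "exp (- \<Phi> e) \<le> 1" by simp
      then have "h e \<le> F e" unfolding h_def using Fnn[of e] by (simp add: mult_left_le)
      then show ?thesis using hdec[OF e] Fle[OF e(1)] by simp
    qed
    have h1: "h \<theta> \<le> 1"
    proof (rule tendsto_le[OF trivial_limit_at_right_real])
      show "((\<lambda>e. exp (e * x)) \<longlongrightarrow> 1) (at_right 0)"
        by (rule tendsto_eq_intros refl | simp)+
      show "((\<lambda>e. h \<theta>) \<longlongrightarrow> h \<theta>) (at_right 0)" by simp
      show "\<forall>\<^sub>F e in at_right 0. h \<theta> \<le> exp (e * x)"
        unfolding eventually_at_right_field using th hle by (intro exI[of _ \<theta>]) auto
    qed
    then have Fth: "F \<theta> \<le> exp (\<Phi> \<theta>)" unfolding h_def by (simp add: exp_minus field_simps)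
    have "measure M ?A * exp (\<theta> * x) = (\<integral>w. indicator ?A w * exp (\<theta> * x) \<partial>M)"
      using Asets by simp
    also have "\<dots> \<le> F \<theta>" unfolding F_def
    proof (rule integral_mono)
      have "integrable M (indicat_real ?A)"
        using Asets by (intro integrable_real_indicator) (auto simp: less_top[symmetric])
      then show "integrable M (\<lambda>w. indicator ?A w * exp (\<theta> * x))" by simp
      show "integrable M (\<lambda>w. exp (\<theta> * Y w))"
        by (rule M.integrable_const_bound[where B="exp (\<theta> * x)"])
           (use Ym Yx th in \<open>auto simp: mult_left_mono\<close>)
      fix w assume "w \<in> space M"
      show "indicator ?A w * exp (\<theta> * x) \<le> exp (\<theta> * Y w)"
        by (cases "x \<le> X w") (auto simp: indicator_def Y_def \<open>w \<in> space M\<close>)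
    qed
    also have "\<dots> \<le> exp (\<Phi> \<theta>)" by (rule Fth)
    finally have "measure M ?A \<le> exp (\<Phi> \<theta>) / exp (\<theta> * x)" by (simp add: field_simps)
    also have "\<dots> = exp (\<Phi> \<theta> - \<theta> * x)" by (simp add: exp_diff)
    also have "\<Phi> \<theta> - \<theta> * x = - (x\<^sup>2 / (2 * (k\<^sup>2 + c * x)))"
    proof -
      have "1 - c * \<theta> = k\<^sup>2 / K" unfolding \<theta>_def K_def using K unfolding K_def
        by (simp add: field_simps)
      then have "\<Phi> \<theta> = k\<^sup>2 * \<theta>\<^sup>2 / (2 * (k\<^sup>2 / K))" unfolding \<Phi>_def by simp
      also have "\<dots> = \<theta>\<^sup>2 * K / 2" using K A(11) by (simp add: field_simps)
      also have "\<dots> = x\<^sup>2 / (2 * K)" unfolding \<theta>_def using K by (simp add: field_simps power2_eq_square)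
      finally have "\<Phi> \<theta> = x\<^sup>2 / (2 * K)" .
      then show ?thesis unfolding \<theta>_def K_def using K unfolding K_def
        by (simp add: field_simps power2_eq_square)
    qed
    finally show ?thesis using setA by simp
  qed
qed

end
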